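(* Let $C'$, $S$ and $\widehat C$ be as in the context, and let $C$ be a column whose entries are a rearrangement of the elements of $S$ such that the two-column configuration $(C,C')$ is HHL. If there exist two distinct pivot entries $x,y$ of $\widehat C$ such that the transposition of $x$ and $y$ is legal with respect to $(C,C')$, then $(\widehat C,C')$ does not satisfy the Non-overlapping Condition.
   Context: A column is a finite sequence of entries listed top to bottom. $C'=(C'(1),\ldots,C'(c'))$ is a sequence of distinct positive integers and $S$ is a set of $c$ positive integers, $c\in\{c',c'+1\}$, such that with $s_1<\cdots<s_c$ the elements of $S$ and $t_1<\cdots<t_{c'}$ the entries of $C'$ sorted, $s_r\le t_r$ for $r\le c'$. The column $\widehat C$ of length $c$ is built as follows: every $x\in S\cap C'$ is placed in the row where $x$ occurs in $C'$; if $c=c'+1$, the largest element of $S\setminus C'$ is placed in row $c$; the remaining elements of $S\setminus C'$, in decreasing order, are placed in the rows occupied in $C'$ by the elements of $C'\setminus S$, in decreasing order (the $k$-th largest next to the $k$-th largest). A two-column configuration $(C,C')$ (left column $C$ of length $c$, right column $C'$) is HHL if the entries of each column are distinct, $C(j)\ne C'(r)$ whenever $r<j$, and $C(r)\le C'(r)$ for all $r\le c'$. A transposition of two entries $x,y$ of $C$ is legal with respect to $(C,C')$ if the column obtained from $C$ by swapping the positions of $x$ and $y$ forms, together with $C'$, an HHL configuration. Pivots: row $r$ is a pivot row of $(\widehat C,C')$ if either $r\le c'$ and $\widehat C(r)<C'(r)$, or $r=c'+1\le c$. If $q_1,\ldots,q_p$ are the pivot rows, the pivot entries of $\widehat C$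 are $b_j=\widehat C(q_j)$; set $d_j=C'(q_j)$ if $q_j\le c'$ and $d_j=\infty$ otherwise. $(\widehat C,C')$ satisfies the Non-overlapping Condition if $p\le1$, or if the intervals $[b_j,d_j]$ (meaning $[b_j,\infty)$ when $d_j=\infty$) are pairwise disjoint for $j\ne k$ in $[p]$. *)

theory Defs
  imports Main
begin

text \<open>Columns are lists of natural numbers; row r (1-based in the paper) is list index r-1.\<close>

definition col_conditions :: "nat list \<Rightarrow> nat set \<Rightarrow> bool" where
  "col_conditions C' S \<longleftrightarrow>
     distinct C' \<and> (\<forall>t\<in>set C'. 0 < t) \<and>
     finite S \<and> (\<forall>s\<in>S. 0 < s) \<and>
     (card S = length C' \<or> card S = length C' + 1) \<and>
     (\<forall>r < length C'. sorted_list_of_set S ! r \<le> sort C' ! r)"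

definition hat_col :: "nat list \<Rightarrow> nat set \<Rightarrow> nat list" where
  "hat_col C' S =
    (let A = S - set C';
         B = set C' - S;
         R = (if card S = length C' + 1 then A - {Max A} else A);
         Rdec = rev (sorted_list_of_set R)
     in map (\<lambda>i. if i < length C' then
                   (if C' ! i \<in> S then C' ! i
                    else Rdec ! card {b \<in> B. C' ! i < b})
                 else Max A) [0..<card S])"

definition HHL :: "nat list \<Rightarrow> nat list \<Rightarrow> bool" where
  "HHL C C' \<longleftrightarrow>
     distinct C \<and> distinct C' \<and>
     (\<forall>j r. j < length C \<and> r < length C' \<and> r < j \<longrightarrow> C ! j \<noteq> C' ! r) \<and>
     (\<forall>r. r < length C' \<and> r < length C \<longrightarrow> C ! r \<le> C' ! r)"

definition swap_entries :: "nat \<Rightarrow> nat \<Rightarrow> nat list \<Rightarrow> nat list" where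
  "swap_entries x y C = map (\<lambda>z. if z = x then y else if z = y then x else z) C"

definition legal_transp :: "nat \<Rightarrow> nat \<Rightarrow> nat list \<Rightarrow> nat list \<Rightarrow> bool" where
  "legal_transp x y C C' \<longleftrightarrow>
     x \<in> set C \<and> y \<in> set C \<and> HHL (swap_entries x y C) C'"

definition pivot_row :: "nat list \<Rightarrow> nat list \<Rightarrow> nat \<Rightarrow> bool" where
  "pivot_row Ch C' q \<longleftrightarrow>
     (q < length C' \<and> q < length Ch \<and> Ch ! q < C' ! q) \<or>
     (q = length C' \<and> length C' < length Ch)"

definition pivot_entry :: "nat list \<Rightarrow> nat list \<Rightarrow> nat \<Rightarrow> bool" where
  "pivot_entry Ch C' x \<longleftrightarrow> (\<exists>q. pivot_row Ch C' q \<and> Ch ! q = x)"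

text \<open>Interval [b_j, d_j] attached to pivot row q (unbounded if d_j = infinity),
  as a set of integers (entries are integers, so disjointness is unaffected).\<close>
definition pivot_interval :: "nat list \<Rightarrow> nat list \<Rightarrow> nat \<Rightarrow> nat set" where
  "pivot_interval Ch C' q =
     (if q < length C' then {Ch ! q .. C' ! q} else {Ch ! q ..})"

definition non_overlapping :: "nat list \<Rightarrow> nat list \<Rightarrow> bool" where
  "non_overlapping Ch C' \<longleftrightarrow>
     (\<forall>q1 q2. pivot_row Ch C' q1 \<and> pivot_row Ch C' q2 \<and> q1 \<noteq> q2 \<longrightarrow>
        pivot_interval Ch C' q1 \<inter> pivot_interval Ch C' q2 = {})"

end

theory Submission
  imports Defs
begin

definition kk :: "nat list \<Rightarrow> nat set \<Rightarrow> nat \<Rightarrow> nat" where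
  "kk C' S b = card {b' \<in> set C' - S. b < b'}"
definition RR :: "nat list \<Rightarrow> nat set \<Rightarrow> nat set" where
  "RR C' S = (if card S = length C' + 1 then (S - set C') - {Max (S - set C')} else S - set C')"
definition Rd :: "nat list \<Rightarrow> nat set \<Rightarrow> nat list" where
  "Rd C' S = rev (sorted_list_of_set (RR C' S))"

lemma hat_len: "length (hat_col C' S) = card S"
  by (simp add: hat_col_def Let_def)

lemma hat_nth: "i < card S \<Longrightarrow> hat_col C' S ! i =
   (if i < length C' then (if C' ! i \<in> S then C' ! i else Rd C' S ! kk C' S (C' ! i))
    else Max (S - set C'))"
  by (simp add: hat_col_def Let_def RR_def Rd_def kk_def)

lemma RR_sub: "RR C' S \<subseteq> S - set C'"
  by (auto simp: RR_def)

lemma card_RR: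
  assumes "col_conditions C' S"
  shows "card (RR C' S) = card (set C' - S)"
proof -
  have fS: "finite S" and d: "distinct C'"
    and c: "card S = length C' \<or> card S = length C' + 1"
    using assms by (auto simp: col_conditions_def)
  have lc: "card (set C') = length C'" using d by (simp add: distinct_card)
  have a: "card (S - set C') = card S - card (S \<inter> set C')"
    by (metis Diff_Int2 card_Diff_subset_Int fS finite_Int inf.idem)
  have b: "card (set C' - S) = card (set C') - card (S \<inter> set C')"
    by (metis Int_commute card_Diff_subset_Int finite_Int finite_set inf_le2 Diff_Int2 inf.idem)
  have le1: "card (S \<inter> set C') \<le> card S" by (simp add: card_mono fS)
  have le2: "card (S \<inter> set C') \<le> card (set C')" by (simp add: card_mono)
  show ?thesis
  proof (cases "card S = length C' + 1")
    case True
    then have ne: "S - set C' \<noteq> {}" using a b lc le1 le2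
      by (metis Suc_eq_plus1 add_diff_cancel_left' card.empty diff_is_0_eq not_less_eq_eq plus_1_eq_Suc zero_less_Suc Diff_disjoint Int_commute card_gt_0_iff)
    have "Max (S - set C') \<in> S - set C'" using ne fS by (intro Max_in) auto
    then have "card (RR C' S) = card (S - set C') - 1" using True fS by (simp add: RR_def)
    then show ?thesis using True a b lc le1 le2 by simp
  next
    case False
    then show ?thesis using c a b lc le1 le2 by (simp add: RR_def)
  qed
qed

lemma kk_lt:
  assumes "b \<in> set C' - S" shows "kk C' S b < card (set C' - S)"
  unfolding kk_def
  by (rule psubset_card_mono) (use assms in auto)

lemma kk_mono:
  assumes "b \<in> set C' - S" "b' \<in> set C' - S" "b < b'"
  shows "kk C' S b' < kk C' S b"
  unfolding kk_def
  by (rule psubset_card_mono) (use assms in auto)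

lemma Rd_len: "finite S \<Longrightarrow> length (Rd C' S) = card (RR C' S)"
  unfolding Rd_def using RR_sub
  by (metis finite_Diff length_rev rev_finite_subset sorted_list_of_set.length_sorted_key_list_of_set)

lemma Rd_in: "finite S \<Longrightarrow> k < card (RR C' S) \<Longrightarrow> Rd C' S ! k \<in> RR C' S"
proof -
  assume f: "finite S" and k: "k < card (RR C' S)"
  have fR: "finite (RR C' S)" using f RR_sub by (meson finite_Diff rev_finite_subset)
  have "Rd C' S ! k \<in> set (Rd C' S)" using k Rd_len[OF f] by simp
  then show ?thesis using fR by (simp add: Rd_def)
qed

lemma Rd_dec: "finite S \<Longrightarrow> i < j \<Longrightarrow> j < card (RR C' S) \<Longrightarrow> Rd C' S ! j < Rd C' S ! i"
proof -
  assume f: "finite S" and ij: "i < j" and j: "j < card (RR C' S)"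
  have fR: "finite (RR C' S)" using f RR_sub by (meson finite_Diff rev_finite_subset)
  let ?l = "sorted_list_of_set (RR C' S)"
  have len: "length ?l = card (RR C' S)" by simp
  have st: "sorted_wrt (<) ?l" by simp
  have "?l ! (length ?l - Suc j) < ?l ! (length ?l - Suc i)"
    using sorted_wrt_nth_less[OF st, of "length ?l - Suc j" "length ?l - Suc i"] ij j len by linarith
  then show ?thesis unfolding Rd_def using ij j len by (simp add: rev_nth)
qed

lemma Rd_inj: "finite S \<Longrightarrow> i < card (RR C' S) \<Longrightarrow> j < card (RR C' S) \<Longrightarrow> Rd C' S ! i = Rd C' S ! j \<Longrightarrow> i = j"
  by (metis Rd_dec less_irrefl nat_neq_iff)

lemma ccD: assumes "col_conditions C' S"
  shows "finite S" "distinct C'" "card S = length C' \<or> card S = length C' + 1"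
  using assms by (auto simp: col_conditions_def)

lemma A_ne: assumes "col_conditions C' S" "card S = length C' + 1"
  shows "S - set C' \<noteq> {}" "Max (S - set C') \<in> S - set C'"
proof -
  have "card S - card (set C') \<le> card (S - set C')" by (rule diff_card_le_card_Diff) simp
  moreover have "card (set C') \<le> length C'" by (rule card_length)
  moreover have "S \<subseteq> set C' \<Longrightarrow> card S \<le> card (set C')" by (rule card_mono) simp_all
  ultimately show ne: "S - set C' \<noteq> {}" using assms(2) by auto
  show "Max (S - set C') \<in> S - set C'" using ne ccD(1)[OF assms(1)] by (intro Max_in) auto
qed

lemma Rd_val: assumes "col_conditions C' S" "b \<in> set C' - S"
  shows "Rd C' S ! kk C' S b \<in> RR C' S"
  using Rd_in[OF ccD(1)[OF assms(1)]] kk_lt[OF assms(2)] card_RR[OF assms(1)] by simp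

lemma hat_inj_aux:
  assumes cc: "col_conditions C' S" and i: "i < length C'" and j: "j < card S"
    and eq: "hat_col C' S ! i = hat_col C' S ! j"
  shows "i = j"
proof -
  note f = ccD(1)[OF cc] and d = ccD(2)[OF cc] and c = ccD(3)[OF cc]
  have ic: "i < card S" using i c by auto
  show ?thesis
  proof (cases "C' ! i \<in> S")
    case True
    then have hi: "hat_col C' S ! i = C' ! i" using hat_nth[OF ic] i by simp
    have inC: "C' ! i \<in> set C'" using i by simp
    show ?thesis
    proof (cases "j < length C'")
      case jn: True
      show ?thesis
      proof (cases "C' ! j \<in> S")
        case True
        then show ?thesis using hat_nth[OF j] jn hi eq d i nth_eq_iff_index_eq by fastforce
      next
        case False
        then have "hat_col C' S ! j \<in> RR C' S" using hat_nth[OF j] jn Rd_val[OF cc] by simp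
        then show ?thesis using RR_sub hi eq inC by auto
      qed
    next
      case jn: False
      then have "card S = length C' + 1" using j c by auto
      then have "hat_col C' S ! j \<in> S - set C'" using hat_nth[OF j] jn A_ne[OF cc] by simp
      then show ?thesis using hi eq inC by auto
    qed
  next
    case iS: False
    then have hi: "hat_col C' S ! i = Rd C' S ! kk C' S (C' ! i)" using hat_nth[OF ic] i by simp
    have bi: "C' ! i \<in> set C' - S" using i iS by simp
    have hiR: "hat_col C' S ! i \<in> RR C' S" using hi Rd_val[OF cc bi] by simp
    show ?thesis
    proof (cases "j < length C'")
      case jn: True
      show ?thesis
      proof (cases "C' ! j \<in> S")
        case True
        then have "hat_col C' S ! j \<in> set C'" using hat_nth[OF j] jn by simp
        then show ?thesis using hiR eq RR_sub[of C' S] by auto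
      next
        case False
        have bj: "C' ! j \<in> set C' - S" using jn False by simp
        have hj: "hat_col C' S ! j = Rd C' S ! kk C' S (C' ! j)" using hat_nth[OF j] jn False by simp
        have "kk C' S (C' ! i) = kk C' S (C' ! j)"
          using Rd_inj[OF f] kk_lt[OF bi] kk_lt[OF bj] card_RR[OF cc] hi hj eq by metis
        then have "C' ! i = C' ! j" using kk_mono[OF bi bj] kk_mono[OF bj bi]
          by (metis less_irrefl nat_neq_iff)
        then show ?thesis using d i jn nth_eq_iff_index_eq by blast
      qed
    next
      case jn: False
      then have e: "card S = length C' + 1" using j c by auto
      then have "hat_col C' S ! j = Max (S - set C')" using hat_nth[OF j] jn by simp
      moreover have "Max (S - set C') \<notin> RR C' S" using e by (simp add: RR_def)
      ultimately show ?thesis using hiR eq by auto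
    qed
  qed
qed

lemma hat_inj:
  assumes cc: "col_conditions C' S" and i: "i < card S" and j: "j < card S"
    and eq: "hat_col C' S ! i = hat_col C' S ! j"
  shows "i = j"
proof (cases "i < length C'")
  case True then show ?thesis by (rule hat_inj_aux[OF cc _ j eq])
next
  case F1: False
  show ?thesis
  proof (cases "j < length C'")
    case True then show ?thesis using hat_inj_aux[OF cc True i eq[symmetric]] by simp
  next
    case False then show ?thesis using F1 i j ccD(3)[OF cc] by linarith
  qed
qed

lemma pivot_cases:
  assumes cc: "col_conditions C' S" and p: "pivot_row (hat_col C' S) C' q"
  shows "q < card S \<and> ((q < length C' \<and> C' ! q \<notin> S \<and> hat_col C' S ! q = Rd C' S ! kk C' S (C' ! q))
     \<or> (q = length C' \<and> card S = length C' + 1 \<and> hat_col C' S ! q = Max (S - set C')))"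
proof -
  have qc: "q < card S" using p by (auto simp: pivot_row_def hat_len)
  show ?thesis
  proof (cases "q < length C'")
    case True
    then have "hat_col C' S ! q < C' ! q" using p by (auto simp: pivot_row_def)
    then show ?thesis using hat_nth[OF qc] True qc by (auto split: if_splits)
  next
    case False
    then show ?thesis using p qc hat_nth[OF qc] ccD(3)[OF cc] by (auto simp: pivot_row_def hat_len)
  qed
qed

lemma pivot_in_A:
  assumes cc: "col_conditions C' S" and p: "pivot_row (hat_col C' S) C' q"
  shows "hat_col C' S ! q \<in> S - set C'"
proof -
  have "C' ! q \<in> set C' - S \<Longrightarrow> Rd C' S ! kk C' S (C' ! q) \<in> S - set C'"
    using Rd_val[OF cc, of "C' ! q"] RR_sub[of C' S] by blast
  then show ?thesis using pivot_cases[OF cc p] A_ne[OF cc] by auto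
qed

lemma main_lt:
  fixes C C' :: "nat list" and S :: "nat set" and x y :: nat
  assumes cc: "col_conditions C' S"
    and sC: "set C = S" and lC: "length C = card S"
    and hC: "HHL C C'" and xy: "x < y"
    and px: "pivot_entry (hat_col C' S) C' x"
    and py: "pivot_entry (hat_col C' S) C' y"
    and lg: "legal_transp x y C C'"
    and NO: "non_overlapping (hat_col C' S) C'"
  shows False
proof -
  note f = ccD(1)[OF cc]
  define H where "H = hat_col C' S"
  define n where "n = length C'"
  define A where "A = S - set C'"
  obtain q1 where q1: "pivot_row H C' q1" "H ! q1 = x" using px by (auto simp: pivot_entry_def H_def)
  obtain q2 where q2: "pivot_row H C' q2" "H ! q2 = y" using py by (auto simp: pivot_entry_def H_def)
  have yA: "y \<in> A" using pivot_in_A[OF cc q2(1)[unfolded H_def]] q2(2) by (simp add: H_def A_def)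
  have xA: "x \<in> A" using pivot_in_A[OF cc q1(1)[unfolded H_def]] q1(2) by (simp add: H_def A_def)
  have fA: "finite A" using f by (simp add: A_def)
  have yM: "y \<le> Max A" using yA fA by simp
  have MA: "Max A \<in> A" using yA fA by (intro Max_in) auto
  have q1c: "q1 < n" "C' ! q1 \<notin> S" "x = Rd C' S ! kk C' S (C' ! q1)"
    using pivot_cases[OF cc q1(1)[unfolded H_def]] q1(2) xy yM by (auto simp: H_def n_def A_def)
  define L where "L = C' ! q1"
  have b1: "L \<in> set C' - S" using q1c by (simp add: L_def n_def)
  have xL: "x < L" using q1 q1c by (simp add: pivot_row_def L_def n_def)
  have I1: "pivot_interval H C' q1 = {x..L}" using q1c q1 by (simp add: pivot_interval_def L_def n_def)
  have yI2: "y \<in> pivot_interval H C' q2" using q2 by (auto simp: pivot_interval_def pivot_row_def)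
  have "q1 \<noteq> q2" using q1 q2 xy by auto
  then have "pivot_interval H C' q1 \<inter> pivot_interval H C' q2 = {}"
    using NO q1 q2 by (auto simp: non_overlapping_def H_def)
  then have yL: "L < y" using yI2 I1 xy by auto
  obtain i where i: "i < card S" "C ! i = x" using xA sC lC by (metis A_def DiffD1 in_set_conv_nth)
  have iR: "n \<le> i \<or> y \<le> C' ! i"
  proof (cases "i < n")
    case True
    have h: "HHL (swap_entries x y C) C'" using lg by (simp add: legal_transp_def)
    have "swap_entries x y C ! i = y" using i lC by (simp add: swap_entries_def)
    then show ?thesis using h True i lC by (auto simp: HHL_def swap_entries_def n_def)
  qed simp
  define Rows where "Rows = {r. r < card S \<and> (n \<le> r \<or> L < C' ! r)}"
  have fR: "finite Rows" by (simp add: Rows_def)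
  have hhl: "\<And>r. r < n \<Longrightarrow> r < card S \<Longrightarrow> C ! r \<le> C' ! r"
    using hC lC by (auto simp: HHL_def n_def)
  have sub1: "insert x {z \<in> S. L < z} \<subseteq> (!) C ` Rows"
  proof
    fix z assume z: "z \<in> insert x {z \<in> S. L < z}"
    show "z \<in> (!) C ` Rows"
    proof (cases "z = x")
      case True
      then show ?thesis using i iR yL by (auto simp: Rows_def)
    next
      case False
      then have zS: "z \<in> S" "L < z" using z by auto
      obtain r where r: "r < card S" "C ! r = z" using zS sC lC by (metis in_set_conv_nth)
      have "n \<le> r \<or> L < C' ! r" using hhl[of r] r zS by force
      then show ?thesis using r by (auto simp: Rows_def)
    qed
  qed
  have "card (insert x {z \<in> S. L < z}) \<le> card Rows"
    using card_image_le[OF fR, of "(!) C"] card_mono[OF finite_imageI[OF fR] sub1] by linarith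
  then have c1: "card {z \<in> S. L < z} + 1 \<le> card Rows" using f xL by simp
  have sub2: "(!) H ` Rows \<subseteq> {z \<in> S. L < z}"
  proof
    fix v assume "v \<in> (!) H ` Rows"
    then obtain r where r: "r \<in> Rows" "v = H ! r" by auto
    have rc: "r < card S" using r by (simp add: Rows_def)
    show "v \<in> {z \<in> S. L < z}"
    proof (cases "r < n")
      case False
      then have "v = Max A" using r hat_nth[OF rc] by (simp add: H_def n_def A_def)
      then show ?thesis using MA yM yL by (simp add: A_def)
    next
      case rn: True
      then have LC: "L < C' ! r" using r by (simp add: Rows_def)
      show ?thesis
      proof (cases "C' ! r \<in> S")
        case True
        then show ?thesis using r hat_nth[OF rc] rn LC by (simp add: H_def n_def)
      next
        case False
        have b: "C' ! r \<in> set C' - S" using False rn by (simp add: n_def)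
        have v: "v = Rd C' S ! kk C' S (C' ! r)" using r hat_nth[OF rc] rn False by (simp add: H_def n_def)
        have vR: "v \<in> RR C' S" using v Rd_val[OF cc b] by simp
        have vS: "v \<in> S" using vR RR_sub[of C' S] by auto
        have "kk C' S (C' ! r) < kk C' S L" using kk_mono[OF b1 b LC] .
        then have xv: "x < v" using Rd_dec[OF f] kk_lt[OF b1] card_RR[OF cc] q1c v L_def by metis
        have "L < v"
        proof (rule ccontr)
          assume "\<not> L < v"
          then have vL: "v \<le> L" by simp
          have pr: "pivot_row H C' r" using rn rc vL LC v r
            by (auto simp: pivot_row_def H_def n_def hat_len)
          have "r \<noteq> q1" using LC L_def by auto
          then have "pivot_interval H C' r \<inter> pivot_interval H C' q1 = {}"
            using NO pr q1 by (auto simp: non_overlapping_def H_def)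
          moreover have "L \<in> pivot_interval H C' r" using rn vL LC r
            by (simp add: pivot_interval_def n_def)
          moreover have "L \<in> pivot_interval H C' q1" using I1 xL by simp
          ultimately show False by blast
        qed
        then show ?thesis using vS by simp
      qed
    qed
  qed
  have inj: "inj_on ((!) H) Rows"
    by (rule inj_onI) (auto simp: Rows_def H_def intro: hat_inj[OF cc])
  have "card Rows \<le> card {z \<in> S. L < z}"
    using card_mono[OF _ sub2] card_image[OF inj] f by simp
  then show False using c1 by simp
qed

lemma legal_sym: "x \<noteq> y \<Longrightarrow> legal_transp x y C C' \<Longrightarrow> legal_transp y x C C'"
proof -
  assume "x \<noteq> y" "legal_transp x y C C'"
  moreover have "swap_entries y x C = swap_entries x y C" using \<open>x \<noteq> y\<close>
    by (auto simp: swap_entries_def)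
  ultimately show ?thesis by (simp add: legal_transp_def)
qed

theorem lemma4p1:
  fixes C C' :: "nat list" and S :: "nat set" and x y :: nat
  assumes "col_conditions C' S"
    and "set C = S" and "length C = card S"
    and "HHL C C'"
    and "x \<noteq> y"
    and "pivot_entry (hat_col C' S) C' x"
    and "pivot_entry (hat_col C' S) C' y"
    and "legal_transp x y C C'"
  shows "\<not> non_overlapping (hat_col C' S) C'"
proof
  assume NO: "non_overlapping (hat_col C' S) C'"
  show False
  proof (cases "x < y")
    case True
    show ?thesis by (rule main_lt[OF assms(1-4) True assms(6,7,8) NO])
  next
    case False
    then have "y < x" using assms(5) by simp
    then show ?thesis using main_lt[OF assms(1-4) _ assms(7,6) legal_sym[OF assms(5,8)] NO] by blast
  qed
qed

end
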